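(* Let $\mathcal{U}\subseteq\mathbb{R}^d$, $\mathcal{V}\subseteq\mathbb{R}^D$ be compact convex with $\|u\|\le B$ for all $u\in\mathcal{U}$. Let $f:\mathcal{U}\times\mathcal{V}\to\mathbb{R}$ be continuous, with $f(\cdot,v)$ convex and differentiable for every $v$, $\|\nabla_u f(u,v)\|\le L$ for all $(u,v)$, $f(u,\cdot)$ $l$-Lipschitz and $\nabla_u f(u,\cdot)$ $r$-Lipschitz for every $u$. Let $\phi$ attain its minimum $\phi^\ast=\phi(u^\ast)$ on $\mathcal{U}$. Consider sequences $u_1,u_2,\dots\in\mathcal{U}$ and finite sets $A_1,A_2,\dots\subseteq\mathcal{V}$, numbers $\epsilon_i\ge0$, $\rho_i\ge0$, $\xi_i\ge0$, with updates $u_{i+1}=u_i-\rho_i z_i$ where $z_i\in\mathrm{co}\{\nabla_u f(u_i,v): v\in R^{\epsilon_i}_{A_i}(u_i)\}$. Suppose there is $i_0\ge1$ such that for all $i\ge i_0$: $R(u_i)$ and $S(u_i)$ are finite, $\epsilon_i<\zeta_i$, and $\max[d_H(R(u_i),A_i),d_H(A_i,S(u_i))]\le\delta_i$ where $\delta_i<\tfrac12(\zeta_i-\epsilon_i)/l$ and $\delta_i\le\tfrac12\xi_i/(rB)$. If $\sum_i\rho_i=\infty$, $\sum_i\rho_i^2<\infty$ and $\sum_i\rho_i\xi_i<\infty$, then $\min[\phi(u_1),\dots,\phi(u_i)]\to\phi^\ast$ as $i\to\infty$.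
   Context: Definitions: $\phi(u)=\max_{v\in\mathcal{V}} f(u,v)$, $R(u)=\{v\in\mathcal{V}: f(u,v)=\phi(u)\}$, $S(u)=\{v_0\in\mathcal{V}:\exists r>0,\ \forall v\in\mathcal{V},\ \|v_0-v\|\le r\Rightarrow f(u,v_0)\ge f(u,v)\}$ (local maximum points of $f(u,\cdot)$). $\zeta_i=\phi(u_i)-\max_{v\in S(u_i)\setminus R(u_i)}f(u_i,v)$, with $\zeta_i=\infty$ if $S(u_i)=R(u_i)$. For finite $A$: $\phi_A(u)=\max_{v\in A}f(u,v)$, $R^\epsilon_A(u)=\{v\in A:\phi_A(u)-f(u,v)\le\epsilon\}$. $d_H(X,Y)=\max_{x\in X}\min_{y\in Y}\|x-y\|$. $\mathrm{co}$ denotes convex hull. *)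

theory Defs
  imports "HOL-Analysis.Analysis"
begin

definition phi :: "('a \<Rightarrow> 'b \<Rightarrow> real) \<Rightarrow> 'b set \<Rightarrow> 'a \<Rightarrow> real" where
  "phi f V u = (SUP v\<in>V. f u v)"

definition Rset :: "('a \<Rightarrow> 'b \<Rightarrow> real) \<Rightarrow> 'b set \<Rightarrow> 'a \<Rightarrow> 'b set" where
  "Rset f V u = {v \<in> V. f u v = phi f V u}"

definition Sset :: "('a \<Rightarrow> 'b::real_normed_vector \<Rightarrow> real) \<Rightarrow> 'b set \<Rightarrow> 'a \<Rightarrow> 'b set" where
  "Sset f V u = {v0 \<in> V. \<exists>r>0. \<forall>v\<in>V. norm (v0 - v) \<le> r \<longrightarrow> f u v0 \<ge> f u v}"

definition zeta :: "('a \<Rightarrow> 'b::real_normed_vector \<Rightarrow> real) \<Rightarrow> 'b set \<Rightarrow> 'a \<Rightarrow> ereal" where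
  "zeta f V u = (if Sset f V u = Rset f V u then \<infinity>
      else ereal (phi f V u - (SUP v\<in>Sset f V u - Rset f V u. f u v)))"

definition phiA :: "('a \<Rightarrow> 'b \<Rightarrow> real) \<Rightarrow> 'b set \<Rightarrow> 'a \<Rightarrow> real" where
  "phiA f A u = Max ((\<lambda>v. f u v) ` A)"

definition RepsA :: "('a \<Rightarrow> 'b \<Rightarrow> real) \<Rightarrow> 'b set \<Rightarrow> real \<Rightarrow> 'a \<Rightarrow> 'b set" where
  "RepsA f A eps u = {v \<in> A. phiA f A u - f u v \<le> eps}"

definition dH :: "'b::real_normed_vector set \<Rightarrow> 'b set \<Rightarrow> real" where
  "dH X Y = Max ((\<lambda>x. Min ((\<lambda>y. norm (x - y)) ` Y)) ` X)"

end

theory Submission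
  imports Defs
begin

lemma grad_ineq:
  fixes F :: "'a::euclidean_space \<Rightarrow> real"
  assumes U: "convex U" and cv: "convex_on U F" and x: "x \<in> U" and w: "w \<in> U"
    and d: "(F has_derivative (\<lambda>h. G \<bullet> h)) (at x within U)"
  shows "F x + G \<bullet> (w - x) \<le> F w"
proof -
  define p where "p = (\<lambda>t::real. x + t *\<^sub>R (w - x))"
  have pU: "p ` {0..1} \<subseteq> U"
  proof
    fix y assume "y \<in> p ` {0..1}"
    then obtain t where t: "t \<in> {0..1}" "y = (1 - t) *\<^sub>R x + t *\<^sub>R w"
      by (auto simp: p_def algebra_simps)
    then show "y \<in> U" using U x w by (auto simp: convex_alt)
  qed
  have p0: "p 0 = x" by (simp add: p_def)
  have dp: "(p has_derivative (\<lambda>t. t *\<^sub>R (w - x))) (at 0 within {0..1})"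
    unfolding p_def by (auto intro!: derivative_eq_intros)
  have d2: "(F has_derivative (\<lambda>h. G \<bullet> h)) (at (p 0) within p ` {0..1})"
    using has_derivative_subset[OF d pU] p0 by simp
  have dc: "((\<lambda>t. F (p t)) has_derivative (\<lambda>t. G \<bullet> (t *\<^sub>R (w - x)))) (at 0 within {0..1})"
    using has_derivative_in_compose[OF dp d2] by simp
  hence "((\<lambda>t. F (p t)) has_real_derivative (G \<bullet> (w - x))) (at 0 within {0..1})"
    by (simp add: has_field_derivative_def mult.commute[of _ "G \<bullet> (w - x)"])
  hence lim: "((\<lambda>t. (F (p t) - F (p 0)) / (t - 0)) \<longlongrightarrow> G \<bullet> (w - x)) (at 0 within {0..1})"
    by (simp add: has_field_derivative_iff)
  have lim2: "((\<lambda>t. (F (p t) - F (p 0)) / (t - 0)) \<longlongrightarrow> G \<bullet> (w - x)) (at 0 within {0<..1})"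
    by (rule tendsto_within_subset[OF lim]) auto
  have nb: "at (0::real) within {0<..1} \<noteq> bot"
    by (simp add: at_within_eq_bot_iff)
  have ev: "eventually (\<lambda>t. (F (p t) - F (p 0)) / (t - 0) \<le> F w - F x) (at 0 within {0<..1})"
    unfolding eventually_at_filter
  proof (intro always_eventually allI impI)
    fix t :: real assume "t \<noteq> 0" "t \<in> {0<..1}"
    hence t: "0 < t" "t \<le> 1" by auto
    have "F (p t) = F ((1 - t) *\<^sub>R x + t *\<^sub>R w)" by (simp add: p_def algebra_simps)
    also have "\<dots> \<le> (1 - t) * F x + t * F w" using convex_onD[OF cv] t x w by simp
    finally have "F (p t) - F x \<le> t * (F w - F x)" by (simp add: algebra_simps)
    thus "(F (p t) - F (p 0)) / (t - 0) \<le> F w - F x" using t p0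
      by (simp add: divide_le_eq mult.commute)
  qed
  have "G \<bullet> (w - x) \<le> F w - F x" by (rule tendsto_upperbound[OF lim2 ev nb])
  thus ?thesis by simp
qed

lemma phi_facts:
  fixes f :: "'a \<Rightarrow> 'b::euclidean_space \<Rightarrow> real"
  assumes V: "compact V" "V \<noteq> {}" and lip: "l-lipschitz_on V (\<lambda>v. f x v)"
  shows "\<exists>s\<in>V. f x s = phi f V x" "\<forall>v\<in>V. f x v \<le> phi f V x"
proof -
  have c: "continuous_on V (\<lambda>v. f x v)" using lipschitz_on_continuous_on[OF lip] .
  have "compact ((\<lambda>v. f x v) ` V)" by (rule compact_continuous_image[OF c V(1)])
  then obtain s where s: "s \<in> V" "\<forall>v\<in>V. f x v \<le> f x s"
    using compact_attains_sup[of "(\<lambda>v. f x v) ` V"] V(2) by auto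
  have e: "phi f V x = f x s" unfolding phi_def
    by (rule cSup_eq_maximum) (use s in auto)
  show "\<exists>s\<in>V. f x s = phi f V x" using s e by auto
  show "\<forall>v\<in>V. f x v \<le> phi f V x" using s e by auto
qed

lemma approx_subgrad:
  fixes U :: "'a::euclidean_space set" and V :: "'b::euclidean_space set"
    and f :: "'a \<Rightarrow> 'b \<Rightarrow> real" and g :: "'a \<Rightarrow> 'b \<Rightarrow> 'a"
  assumes U: "convex U"
    and V: "compact V" "V \<noteq> {}"
    and B: "\<forall>x\<in>U. norm x \<le> B"
    and cvx: "\<forall>v\<in>V. convex_on U (\<lambda>x. f x v)"
    and grad: "\<forall>x\<in>U. \<forall>v\<in>V. ((\<lambda>y. f y v) has_derivative (\<lambda>h. g x v \<bullet> h)) (at x within U)"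
    and gbound: "\<forall>x\<in>U. \<forall>v\<in>V. norm (g x v) \<le> L"
    and lip_f: "\<forall>x\<in>U. l-lipschitz_on V (\<lambda>v. f x v)"
    and lip_g: "\<forall>x\<in>U. r-lipschitz_on V (\<lambda>v. g x v)"
    and x: "x \<in> U" and A: "finite A" "A \<subseteq> V"
    and fR: "finite (Rset f V x)" and fS: "finite (Sset f V x)"
    and dR: "dH (Rset f V x) A \<le> \<delta>" and dS: "dH A (Sset f V x) \<le> \<delta>"
    and ze: "ereal (2 * l * \<delta> + \<epsilon>) < zeta f V x"
    and xi: "2 * r * B * \<delta> \<le> \<xi>"
    and z: "z \<in> convex hull ((\<lambda>v. g x v) ` RepsA f A \<epsilon> x)"
  shows "norm z \<le> L" "\<forall>w\<in>U. phi f V x - phi f V w - \<xi> \<le> z \<bullet> (x - w)"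
proof -
  have RA: "RepsA f A \<epsilon> x \<subseteq> A" by (auto simp: RepsA_def)
  have "convex hull ((\<lambda>v. g x v) ` RepsA f A \<epsilon> x) \<subseteq> cball 0 L"
    by (rule hull_minimal) (use RA A gbound x in \<open>auto simp: convex_cball\<close>)
  thus "norm z \<le> L" using z by auto
  have l0: "l \<ge> 0" using lip_f x by (auto simp: lipschitz_on_def)
  have r0: "r \<ge> 0" using lip_g x by (auto simp: lipschitz_on_def)
  have lipf: "\<And>a b. a \<in> V \<Longrightarrow> b \<in> V \<Longrightarrow> \<bar>f x a - f x b\<bar> \<le> l * norm (a - b)"
    using lip_f x by (auto simp: lipschitz_on_def dist_norm)
  have lipg: "\<And>a b. a \<in> V \<Longrightarrow> b \<in> V \<Longrightarrow> norm (g x a - g x b) \<le> r * norm (a - b)"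
    using lip_g x by (auto simp: lipschitz_on_def dist_norm)
  obtain s0 where s0: "s0 \<in> V" "f x s0 = phi f V x" using phi_facts(1)[of V l f x, OF V lip_f[rule_format, OF x]] by auto
  have phiub: "\<And>y v. y \<in> U \<Longrightarrow> v \<in> V \<Longrightarrow> f y v \<le> phi f V y"
    using phi_facts(2)[of V l f, OF V lip_f[rule_format]] by blast
  have s0R: "s0 \<in> Rset f V x" using s0 by (simp add: Rset_def)
  have RS: "Rset f V x \<subseteq> Sset f V x"
  proof
    fix v assume "v \<in> Rset f V x"
    hence "v \<in> V" "f x v = phi f V x" by (auto simp: Rset_def)
    thus "v \<in> Sset f V x" unfolding Sset_def using phiub[OF x]
      by (auto intro!: exI[of _ 1])
  qed
  have near: "\<exists>b\<in>Y. norm (a - b) \<le> \<delta>" if "finite X" "finite Y" "Y \<noteq> {}" "a \<in> X" "dH X Y \<le> \<delta>"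
    for X Y and a :: 'b
  proof -
    have "Min ((\<lambda>y. norm (a - y)) ` Y) \<le> dH X Y" unfolding dH_def
      using that by (intro Max_ge) auto
    moreover have "Min ((\<lambda>y. norm (a - y)) ` Y) \<in> (\<lambda>y. norm (a - y)) ` Y"
      using that by (intro Min_in) auto
    ultimately show ?thesis using that by force
  qed
  have Ane: "A \<noteq> {}"
  proof
    assume "A = {}"
    hence "RepsA f A \<epsilon> x = {}" by (auto simp: RepsA_def)
    thus False using z by simp
  qed
  obtain a0 where a0: "a0 \<in> A" "norm (s0 - a0) \<le> \<delta>" using near[OF fR A(1) Ane s0R dR] by auto
  have phiA_ge: "phiA f A x \<ge> phi f V x - l * \<delta>"
  proof -
    have "phiA f A x \<ge> f x a0" unfolding phiA_def using A a0 by (intro Max_ge) auto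
    moreover have "f x a0 \<ge> f x s0 - l * norm (s0 - a0)" using lipf[of s0 a0] s0 a0 A by auto
    moreover have "l * norm (s0 - a0) \<le> l * \<delta>" using a0 l0 by (simp add: mult_left_mono)
    ultimately show ?thesis using s0 by linarith
  qed
  show "\<forall>w\<in>U. phi f V x - phi f V w - \<xi> \<le> z \<bullet> (x - w)"
  proof
    fix w assume w: "w \<in> U"
    let ?T = "{y. phi f V x - phi f V w - \<xi> \<le> (x - w) \<bullet> y}"
    have cT: "convex ?T" by (rule convex_halfspace_ge)
    have "(\<lambda>v. g x v) ` RepsA f A \<epsilon> x \<subseteq> ?T"
    proof
      fix y assume "y \<in> (\<lambda>v. g x v) ` RepsA f A \<epsilon> x"
      then obtain v where v: "v \<in> A" "phiA f A x - f x v \<le> \<epsilon>" "y = g x v"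
        by (auto simp: RepsA_def)
      have Sne: "Sset f V x \<noteq> {}" using RS s0R by auto
      obtain s where s: "s \<in> Sset f V x" "norm (v - s) \<le> \<delta>" using near[OF A(1) fS Sne v(1) dS] by auto
      have sV: "s \<in> V" using s by (auto simp: Sset_def)
      have vV: "v \<in> V" using v A by auto
      have "f x s \<ge> f x v - l * norm (v - s)" using lipf[OF vV sV] by auto
      moreover have "l * norm (v - s) \<le> l * \<delta>" using s l0 by (simp add: mult_left_mono)
      ultimately have fs: "f x s \<ge> phi f V x - 2 * l * \<delta> - \<epsilon>" using v phiA_ge by linarith
      have sR: "s \<in> Rset f V x"
      proof (rule ccontr)
        assume nR: "s \<notin> Rset f V x"
        hence ne: "Sset f V x \<noteq> Rset f V x" using s by auto
        have "f x s \<le> (SUP v\<in>Sset f V x - Rset f V x. f x v)"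
          using nR s fS by (intro cSUP_upper) (auto intro!: bdd_above_finite)
        moreover have "2 * l * \<delta> + \<epsilon> < phi f V x - (SUP v\<in>Sset f V x - Rset f V x. f x v)"
          using ze ne by (simp add: zeta_def)
        ultimately show False using fs by linarith
      qed
      hence fse: "f x s = phi f V x" by (simp add: Rset_def)
      have "f x s + g x s \<bullet> (w - x) \<le> f w s"
        by (rule grad_ineq[OF U cvx[rule_format, OF sV] x w grad[rule_format, OF x sV]])
      moreover have "f w s \<le> phi f V w" using phiub[OF w sV] .
      ultimately have sub: "phi f V x - phi f V w \<le> (x - w) \<bullet> g x s"
        using fse inner_minus_left[of "x - w" "g x s"] by (simp add: inner_commute)
      have "\<bar>(x - w) \<bullet> (g x v - g x s)\<bar> \<le> norm (x - w) * norm (g x v - g x s)"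
        by (rule Cauchy_Schwarz_ineq2)
      also have "\<dots> \<le> (2 * B) * (r * \<delta>)"
      proof (rule mult_mono)
        show "norm (x - w) \<le> 2 * B" using B x w norm_triangle_ineq4[of x w] by (metis add_mono mult_2 order_trans)
        have "norm (g x v - g x s) \<le> r * norm (v - s)" by (rule lipg[OF vV sV])
        also have "\<dots> \<le> r * \<delta>" using s r0 by (simp add: mult_left_mono)
        finally show "norm (g x v - g x s) \<le> r * \<delta>" .
        have "norm x \<le> B" using B x by blast
        then show "0 \<le> 2 * B" using norm_ge_zero[of x] by linarith
      qed simp
      finally have "\<bar>(x - w) \<bullet> (g x v - g x s)\<bar> \<le> \<xi>" using xi by (simp add: algebra_simps)
      hence "(x - w) \<bullet> g x v \<ge> (x - w) \<bullet> g x s - \<xi>" by (simp add: inner_diff_right abs_le_iff)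
      thus "y \<in> ?T" using sub v by simp
    qed
    hence "convex hull ((\<lambda>v. g x v) ` RepsA f A \<epsilon> x) \<subseteq> ?T" using cT by (intro hull_minimal)
    thus "phi f V x - phi f V w - \<xi> \<le> z \<bullet> (x - w)" using z by (auto simp: inner_commute)
  qed
qed

lemma sqexp: "(norm (a - t *\<^sub>R b))\<^sup>2 = (norm a)\<^sup>2 - 2 * t * (b \<bullet> a) + t\<^sup>2 * (norm b)\<^sup>2"
  for a b :: "'a::real_inner"
  unfolding power2_norm_eq_inner
  by (simp add: inner_diff_left inner_diff_right inner_commute power2_eq_square algebra_simps)

theorem mainTheorem5:
  fixes U :: "'a::euclidean_space set" and V :: "'b::euclidean_space set"
    and f :: "'a \<Rightarrow> 'b \<Rightarrow> real" and g :: "'a \<Rightarrow> 'b \<Rightarrow> 'a"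
    and B L l r :: real and ustar :: 'a
    and u z :: "nat \<Rightarrow> 'a" and A :: "nat \<Rightarrow> 'b set"
    and eps rho xi delta :: "nat \<Rightarrow> real" and i0 :: nat
  assumes U: "compact U" "convex U"
    and V: "compact V" "convex V" "V \<noteq> {}"
    and B: "\<forall>x\<in>U. norm x \<le> B"
    and cont: "continuous_on (U \<times> V) (\<lambda>(x, v). f x v)"
    and cvx: "\<forall>v\<in>V. convex_on U (\<lambda>x. f x v)"
    and grad: "\<forall>x\<in>U. \<forall>v\<in>V. ((\<lambda>y. f y v) has_derivative (\<lambda>h. g x v \<bullet> h)) (at x within U)"
    and gbound: "\<forall>x\<in>U. \<forall>v\<in>V. norm (g x v) \<le> L"
    and lip_f: "\<forall>x\<in>U. l-lipschitz_on V (\<lambda>v. f x v)"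
    and lip_g: "\<forall>x\<in>U. r-lipschitz_on V (\<lambda>v. g x v)"
    and ustar: "ustar \<in> U" "\<forall>x\<in>U. phi f V ustar \<le> phi f V x"
    and useq: "\<forall>i\<ge>1. u i \<in> U"
    and Aseq: "\<forall>i\<ge>1. finite (A i) \<and> A i \<subseteq> V"
    and nonneg: "\<forall>i\<ge>1. eps i \<ge> 0 \<and> rho i \<ge> 0 \<and> xi i \<ge> 0"
    and upd: "\<forall>i\<ge>1. u (Suc i) = u i - rho i *\<^sub>R z i"
    and zdir: "\<forall>i\<ge>1. z i \<in> convex hull ((\<lambda>v. g (u i) v) ` RepsA f (A i) (eps i) (u i))"
    and i0: "i0 \<ge> 1"
    and loc: "\<forall>i\<ge>i0. finite (Rset f V (u i)) \<and> finite (Sset f V (u i))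
               \<and> ereal (eps i) < zeta f V (u i)
               \<and> max (dH (Rset f V (u i)) (A i)) (dH (A i) (Sset f V (u i))) \<le> delta i
               \<and> ereal (2 * l * delta i + eps i) < zeta f V (u i)
               \<and> 2 * r * B * delta i \<le> xi i"
    and div: "\<not> summable rho"
    and sq: "summable (\<lambda>i. (rho i)\<^sup>2)"
    and sx: "summable (\<lambda>i. rho i * xi i)"
  shows "(\<lambda>i. Min ((\<lambda>j. phi f V (u j)) ` {1..i})) \<longlonglongrightarrow> phi f V ustar"
proof -
  define P where "P = (\<lambda>j. phi f V (u j))"
  define ps where "ps = phi f V ustar"
  have step: "norm (z i) \<le> L \<and> P i - ps - xi i \<le> z i \<bullet> (u i - ustar)" if i: "i \<ge> i0" for i
  proof -
    have i1: "i \<ge> 1" using i i0 by simp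
    have lo: "finite (Rset f V (u i))" "finite (Sset f V (u i))"
      "max (dH (Rset f V (u i)) (A i)) (dH (A i) (Sset f V (u i))) \<le> delta i"
      "ereal (2 * l * delta i + eps i) < zeta f V (u i)" "2 * r * B * delta i \<le> xi i"
      using loc i by auto
    note as = approx_subgrad[OF U(2) V(1) V(3) B cvx grad gbound lip_f lip_g useq[rule_format, OF i1]
        conjunct1[OF Aseq[rule_format, OF i1]] conjunct2[OF Aseq[rule_format, OF i1]] lo(1) lo(2) _ _ lo(4) lo(5)
        zdir[rule_format, OF i1]]
    have "dH (Rset f V (u i)) (A i) \<le> delta i" "dH (A i) (Sset f V (u i)) \<le> delta i" using lo(3) by auto
    note as2 = as[OF this]
    show ?thesis using as2(1) as2(2) ustar(1) unfolding P_def ps_def by blast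
  qed
  have Pge: "P j \<ge> ps" if "j \<ge> 1" for j using ustar(2) useq that unfolding P_def ps_def by blast
  define m where "m = (\<lambda>i. Min ((\<lambda>j. phi f V (u j)) ` {1..i}))"
  have mge: "m i \<ge> ps" if "i \<ge> 1" for i
    unfolding m_def using that Pge by (subst Min_ge_iff) (auto simp: P_def)
  have mle: "m i \<le> P j" if "1 \<le> j" "j \<le> i" for i j
    unfolding m_def P_def using that by (intro Min_le) auto
  have key: "\<exists>j\<ge>1. P j < ps + e" if e: "e > 0" for e
  proof (rule ccontr)
    assume "\<not> (\<exists>j\<ge>1. P j < ps + e)"
    hence Pe: "\<And>j. j \<ge> 1 \<Longrightarrow> P j \<ge> ps + e" by force
    define D where "D = (\<lambda>n. (norm (u n - ustar))\<^sup>2)"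
    define c where "c = (\<lambda>i. 2 * (rho i * xi i) + L\<^sup>2 * (rho i)\<^sup>2)"
    have csum: "summable c" unfolding c_def
      by (intro summable_add summable_mult sx sq)
    have rec: "D (Suc i) \<le> D i - 2 * e * rho i + c i" if i: "i \<ge> i0" for i
    proof -
      have i1: "i \<ge> 1" using i i0 by simp
      have st: "norm (z i) \<le> L" "P i - ps - xi i \<le> z i \<bullet> (u i - ustar)" using step[OF i] by auto
      have r0: "rho i \<ge> 0" using nonneg i1 by auto
      have "u (Suc i) - ustar = (u i - ustar) - rho i *\<^sub>R z i" using upd i1 by simp
      hence "D (Suc i) = D i - 2 * rho i * (z i \<bullet> (u i - ustar)) + (rho i)\<^sup>2 * (norm (z i))\<^sup>2"
        unfolding D_def by (simp only: sqexp)
      moreover have "2 * rho i * (e - xi i) \<le> 2 * rho i * (z i \<bullet> (u i - ustar))"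
        using st(2) Pe[OF i1] r0 by (intro mult_left_mono) auto
      moreover have "(rho i)\<^sup>2 * (norm (z i))\<^sup>2 \<le> (rho i)\<^sup>2 * L\<^sup>2"
        using st(1) by (intro mult_left_mono power_mono) auto
      ultimately show ?thesis unfolding c_def by (simp add: algebra_simps)
    qed
    have tel: "D (i0 + k) + 2 * e * (\<Sum>i<k. rho (i0 + i)) \<le> D i0 + (\<Sum>i<k. c (i0 + i))" for k
    proof (induction k)
      case 0 then show ?case by simp
    next
      case (Suc k)
      have "D (Suc (i0 + k)) \<le> D (i0 + k) - 2 * e * rho (i0 + k) + c (i0 + k)" by (rule rec) simp
      then show ?case using Suc by (simp add: algebra_simps)
    qed
    have cnn: "c (i0 + i) \<ge> 0" for i
      using nonneg i0 unfolding c_def by (auto intro!: add_nonneg_nonneg mult_nonneg_nonneg)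
    have cs2: "summable (\<lambda>i. c (i + i0))" using csum by (rule summable_ignore_initial_segment)
    hence cs3: "summable (\<lambda>i. c (i0 + i))" by (simp add: add.commute)
    define C where "C = suminf (\<lambda>i. c (i0 + i))"
    have csb: "(\<Sum>i<k. c (i0 + i)) \<le> C" for k
      unfolding C_def using cs3 cnn by (intro sum_le_suminf) auto
    have bnd: "(\<Sum>i<k. rho (i0 + i)) \<le> (D i0 + C) / (2 * e)" for k
    proof -
      have "D (i0 + k) \<ge> 0" unfolding D_def by simp
      hence "2 * e * (\<Sum>i<k. rho (i0 + i)) \<le> D i0 + C" using tel[of k] csb[of k] by linarith
      thus ?thesis using e by (simp add: field_simps)
    qed
    have "summable (\<lambda>i. rho (i0 + i))"
      by (rule summableI_nonneg_bounded[OF _ bnd]) (use nonneg i0 in auto)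
    hence "summable (\<lambda>i. rho (i + i0))" by (simp add: add.commute)
    hence "summable rho" by (simp add: summable_iff_shift)
    thus False using div by simp
  qed
  have "m \<longlonglongrightarrow> ps"
  proof (rule order_tendstoI)
    fix a assume "a < ps"
    show "eventually (\<lambda>i. a < m i) sequentially"
      using eventually_ge_at_top[of 1] by eventually_elim (use mge \<open>a < ps\<close> in force)
  next
    fix a assume "ps < a"
    then obtain j where j: "j \<ge> 1" "P j < a" using key[of "a - ps"] by auto
    show "eventually (\<lambda>i. m i < a) sequentially"
      using eventually_ge_at_top[of j] by eventually_elim (use mle j in force)
  qed
  thus ?thesis unfolding m_def ps_def .
qed

end
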